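(* Let $\lambda$ be a partition with at most $n$ positive parts, and let $n'\geq n$. If the poset $\mathcal B_\lambda^n$ is not a lattice, then the poset $\mathcal B_\lambda^{n'}$ is not a lattice.
   Context: For $N\geq 1$ and a partition $\nu$ with at most $N$ positive parts, $\mathcal B_\nu^N$ is the set of semistandard Young tableaux of shape $\nu$ (rows weakly increasing, columns strictly increasing) with entries in $\{1,\ldots,N+1\}$, partially ordered by the reflexive transitive closure of $T<F_i(T)$ for $i\in\{1,\ldots,N\}$ with $F_i(T)\neq 0$. Here $F_i$ is the type A crystal lowering operator: in the reading word of $T$ (rows read from bottom to top, each row left to right) keep only letters $i$ and $i+1$, replace each $i$ by ")" and each $i+1$ by "(", and match parentheses in the usual way; if there is no unmatched ")", $F_i(T)=0$; otherwise $F_i(T)$ is obtained by changing the entry $i$ corresponding to the rightmost unmatched ")" into $i+1$. *)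

theory Defs
  imports Main
begin

definition is_partition :: "nat list \<Rightarrow> bool" where
  "is_partition lam \<longleftrightarrow> sorted (rev lam) \<and> (\<forall>x\<in>set lam. 0 < x)"

(* Tableau = list of rows (top row first). SSYT of shape lam, entries in {1..N+1}. *)
definition ssyt :: "nat \<Rightarrow> nat list \<Rightarrow> nat list list \<Rightarrow> bool" where
  "ssyt N lam T \<longleftrightarrow> map length T = lam
     \<and> (\<forall>row\<in>set T. sorted row \<and> (\<forall>x\<in>set row. 1 \<le> x \<and> x \<le> N + 1))
     \<and> (\<forall>r. Suc r < length T \<longrightarrow>
           (\<forall>j < length (T ! Suc r). T ! r ! j < T ! Suc r ! j))"

definition tabB :: "nat \<Rightarrow> nat list \<Rightarrow> nat list list set" where
  "tabB N lam = {T. ssyt N lam T}"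

definition reading_word :: "nat list list \<Rightarrow> nat list" where
  "reading_word T = concat (rev T)"

fun split_by :: "nat list \<Rightarrow> 'a list \<Rightarrow> 'a list list" where
  "split_by [] w = []"
| "split_by (l # ls) w = take l w # split_by ls (drop l w)"

(* Scan the word: letter i is ')' and letter i+1 is '('; c counts currently
   unmatched '('; r records the position of the last unmatched ')'. *)
fun unm :: "nat \<Rightarrow> nat list \<Rightarrow> nat \<Rightarrow> nat \<Rightarrow> nat option \<Rightarrow> nat option" where
  "unm i [] k c r = r"
| "unm i (x # xs) k c r =
     (if x = i + 1 then unm i xs (Suc k) (Suc c) r
      else if x = i then
        (if 0 < c then unm i xs (Suc k) (c - 1) r else unm i xs (Suc k) c (Some k))
      else unm i xs (Suc k) c r)"

(* Crystal lowering operator F_i; None represents 0. *)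
definition crystal_F :: "nat \<Rightarrow> nat list list \<Rightarrow> nat list list option" where
  "crystal_F i T =
     (case unm i (reading_word T) 0 0 None of
        None \<Rightarrow> None
      | Some k \<Rightarrow> Some (rev (split_by (map length (rev T)) ((reading_word T)[k := i + 1]))))"

definition crystal_steps :: "nat \<Rightarrow> nat list \<Rightarrow> (nat list list \<times> nat list list) set" where
  "crystal_steps N lam =
     {(T, T'). T \<in> tabB N lam \<and> (\<exists>i\<in>{1..N}. crystal_F i T = Some T')}"

definition crystal_le :: "nat \<Rightarrow> nat list \<Rightarrow> nat list list \<Rightarrow> nat list list \<Rightarrow> bool" where
  "crystal_le N lam S T \<longleftrightarrow> (S, T) \<in> (crystal_steps N lam)\<^sup>*"

definition is_lattice :: "'a set \<Rightarrow> ('a \<Rightarrow> 'a \<Rightarrow> bool) \<Rightarrow> bool" where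
  "is_lattice A le \<longleftrightarrow>
     (\<forall>x\<in>A. \<forall>y\<in>A.
        (\<exists>z\<in>A. le x z \<and> le y z \<and> (\<forall>w\<in>A. le x w \<and> le y w \<longrightarrow> le z w)) \<and>
        (\<exists>z\<in>A. le z x \<and> le z y \<and> (\<forall>w\<in>A. le w x \<and> le w y \<longrightarrow> le w z)))"

end

theory Submission
  imports Defs
begin

definition sh :: "nat \<Rightarrow> nat list list \<Rightarrow> nat list list" where
  "sh d T = map (map (\<lambda>x. x + d)) T"

lemma unsh: "map (map (\<lambda>x. x - d)) (sh d T) = T"
  unfolding sh_def by (simp add: map_idI comp_def)

lemma sh_inj: "sh d a = sh d b \<Longrightarrow> a = b"
  by (metis unsh)

lemma unm_some: "unm i w k0 c r = Some k \<Longrightarrow> r = Some k \<or> (k0 \<le> k \<and> k < k0 + length w \<and> w ! (k - k0) = i)"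
proof (induction w arbitrary: k0 c r)
  case Nil then show ?case by simp
next
  case (Cons x xs)
  show ?case
  proof (cases "x = i + 1")
    case True
    with Cons.prems have "unm i xs (Suc k0) (Suc c) r = Some k" by simp
    from Cons.IH[OF this] show ?thesis
      by (auto simp: nth_Cons')
  next
    case F1: False
    show ?thesis
    proof (cases "x = i")
      case True
      show ?thesis
      proof (cases "0 < c")
        case True
        with F1 \<open>x = i\<close> Cons.prems have "unm i xs (Suc k0) (c - 1) r = Some k" by simp
        from Cons.IH[OF this] show ?thesis
          by (auto simp: nth_Cons')
      next
        case False
        with F1 \<open>x = i\<close> Cons.prems have "unm i xs (Suc k0) c (Some k0) = Some k" by simp
        from Cons.IH[OF this] \<open>x = i\<close> show ?thesis
          by (auto simp: nth_Cons')
      qed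
    next
      case False
      with F1 Cons.prems have "unm i xs (Suc k0) c r = Some k" by simp
      from Cons.IH[OF this] show ?thesis
        by (auto simp: nth_Cons')
    qed
  qed
qed

lemma unm_notin: "i \<notin> set w \<Longrightarrow> unm i w k c r = r"
  by (induction w arbitrary: k c r) auto

lemma unm_shift: "unm (i + d) (map (\<lambda>x. x + d) w) k c r = unm i w k c r"
  by (induction w arbitrary: k c r) auto

lemma split_by_map: "split_by ls (map f v) = map (map f) (split_by ls v)"
  by (induction ls arbitrary: v) (auto simp: take_map drop_map)

lemma concat_split_by: "concat (split_by ls v) = take (sum_list ls) v"
  by (induction ls arbitrary: v) (auto simp: take_add)

lemma F_shift: "crystal_F (i + d) (sh d T) = map_option (sh d) (crystal_F i T)"
proof -
  have rw: "reading_word (sh d T) = map (\<lambda>x. x + d) (reading_word T)"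
    unfolding reading_word_def sh_def by (simp add: rev_map map_concat)
  have ml: "map length (rev (sh d T)) = map length (rev T)"
    unfolding sh_def by (simp add: rev_map comp_def)
  have mu: "\<And>w k. (map (\<lambda>x. x + d) w)[k := i + d + 1] = map (\<lambda>x. x + d) (w[k := i + 1])"
    by (simp add: map_update)
  show ?thesis
    unfolding crystal_F_def rw ml unm_shift mu
    by (auto split: option.splits simp: map_update[symmetric] split_by_map sh_def rev_map)
qed

lemma F_entries:
  assumes "crystal_F i S = Some Y"
  shows "set (concat S) \<subseteq> insert i (set (concat Y)) \<and> i + 1 \<in> set (concat Y)
       \<and> set (concat Y) \<subseteq> insert (i + 1) (set (concat S))"
proof -
  define w where "w = reading_word S"
  obtain k where k: "unm i w 0 0 None = Some k"
    and Y: "Y = rev (split_by (map length (rev S)) (w[k := i + 1]))"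
    using assms unfolding crystal_F_def w_def by (auto split: option.splits)
  from unm_some[OF k] have kl: "k < length w" "w ! k = i" by auto
  have sw: "set w = set (concat S)" unfolding w_def reading_word_def by auto
  have "length w = sum_list (map length (rev S))"
    unfolding w_def reading_word_def by (simp add: length_concat)
  then have sY: "set (concat Y) = set (w[k := i + 1])"
  proof -
    have "set (concat Y) = set (concat (split_by (map length (rev S)) (w[k := i + 1])))"
      unfolding Y by simp
    also have "\<dots> = set (w[k := i + 1])"
      unfolding concat_split_by using \<open>length w = _\<close> by simp
    finally show ?thesis .
  qed
  have a: "set w \<subseteq> insert i (set (w[k := i + 1]))"
  proof
    fix x assume "x \<in> set w"
    then obtain j where j: "j < length w" "x = w ! j" by (auto simp: in_set_conv_nth)
    show "x \<in> insert i (set (w[k := i + 1]))"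
    proof (cases "j = k")
      case True then show ?thesis using j kl by simp
    next
      case False
      then have "w[k := i + 1] ! j = x" using j by simp
      then show ?thesis using j by (metis insertI2 length_list_update nth_mem)
    qed
  qed
  show ?thesis
    using a set_update_subset_insert[of w k "i+1"] set_update_memI[OF kl(1), of "i+1"]
    unfolding sY sw[symmetric] by auto
qed

lemma ssyt_entries: "ssyt N lam T \<Longrightarrow> v \<in> set (concat T) \<Longrightarrow> 1 \<le> v \<and> v \<le> N + 1"
  unfolding ssyt_def by auto

lemma ssyt_mono_bound:
  assumes "ssyt n' lam T" "\<forall>v\<in>set (concat T). v \<le> n + 1"
  shows "ssyt n lam T"
  using assms unfolding ssyt_def by auto

lemma ssyt_mono: "ssyt n lam T \<Longrightarrow> n \<le> n' \<Longrightarrow> ssyt n' lam T"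
  unfolding ssyt_def by fastforce

lemma part_mono: "is_partition lam \<Longrightarrow> Suc r < length lam \<Longrightarrow> lam ! Suc r \<le> lam ! r"
  unfolding is_partition_def using sorted_rev_nth_mono[of lam r "Suc r"] by auto

lemma ssyt_sh:
  assumes "ssyt n lam T" "is_partition lam"
  shows "ssyt (n + d) lam (sh d T)"
proof -
  have pl: "\<And>r. Suc r < length T \<Longrightarrow> length (T ! Suc r) \<le> length (T ! r)"
    using part_mono[OF assms(2)] assms(1) unfolding ssyt_def by auto
  have "map length (sh d T) = lam" using assms unfolding ssyt_def sh_def by (simp add: comp_def)
  moreover have "\<forall>row\<in>set (sh d T). sorted row \<and> (\<forall>x\<in>set row. 1 \<le> x \<and> x \<le> n + d + 1)"
    using assms unfolding ssyt_def sh_def by (fastforce simp: sorted_map)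
  moreover have "\<forall>r. Suc r < length (sh d T) \<longrightarrow>
           (\<forall>j < length (sh d T ! Suc r). sh d T ! r ! j < sh d T ! Suc r ! j)"
  proof (intro allI impI)
    fix r j assume r: "Suc r < length (sh d T)" and j: "j < length (sh d T ! Suc r)"
    have "T ! r ! j < T ! Suc r ! j"
      using assms(1) r j unfolding ssyt_def sh_def by auto
    moreover have "j < length (T ! r)" using pl[of r] r j unfolding sh_def by auto
    ultimately show "sh d T ! r ! j < sh d T ! Suc r ! j"
      using r j unfolding sh_def by simp
  qed
  ultimately show ?thesis unfolding ssyt_def by blast
qed

lemma ssyt_unsh:
  assumes "ssyt (n + d) lam (sh d T)" "\<forall>v\<in>set (concat T). 1 \<le> v" "is_partition lam"
  shows "ssyt n lam T"
proof -
  have pl: "\<And>r. Suc r < length T \<Longrightarrow> length (T ! Suc r) \<le> length (T ! r)"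
    using part_mono[OF assms(3)] assms(1) unfolding ssyt_def sh_def by (auto simp: comp_def)
  have "map length T = lam" using assms unfolding ssyt_def sh_def by (simp add: comp_def)
  moreover have "\<forall>row\<in>set T. sorted row \<and> (\<forall>x\<in>set row. 1 \<le> x \<and> x \<le> n + 1)"
    using assms unfolding ssyt_def sh_def by (fastforce simp: sorted_map)
  moreover have "\<forall>r. Suc r < length T \<longrightarrow>
           (\<forall>j < length (T ! Suc r). T ! r ! j < T ! Suc r ! j)"
  proof (intro allI impI)
    fix r j assume r: "Suc r < length T" and j: "j < length (T ! Suc r)"
    have "sh d T ! r ! j < sh d T ! Suc r ! j"
      using assms(1) r j unfolding ssyt_def sh_def by auto
    moreover have "j < length (T ! r)" using pl[of r] r j by auto
    ultimately show "T ! r ! j < T ! Suc r ! j"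
      using r j unfolding sh_def by simp
  qed
  ultimately show ?thesis unfolding ssyt_def by blast
qed


lemma src_in: "(S, T) \<in> (crystal_steps n lam)\<^sup>* \<Longrightarrow> T \<in> tabB n lam \<Longrightarrow> S \<in> tabB n lam"
  by (erule converse_rtranclE) (auto simp: crystal_steps_def)

lemma F_down:
  assumes "n \<le> n'" "S \<in> tabB n' lam" "crystal_F i S = Some Y" "Y \<in> tabB n lam"
  shows "S \<in> tabB n lam \<and> i \<le> n"
proof -
  note e = F_entries[OF assms(3)]
  have Yb: "\<forall>v\<in>set (concat Y). v \<le> n + 1" using assms(4) ssyt_entries unfolding tabB_def by blast
  have "i + 1 \<in> set (concat Y)" using e by blast
  with Yb have "i \<le> n" by fastforce
  moreover have "\<forall>v\<in>set (concat S). v \<le> n + 1"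
  proof
    fix v assume "v \<in> set (concat S)"
    then have "v = i \<or> v \<in> set (concat Y)" using e by blast
    then show "v \<le> n + 1" using Yb \<open>i \<le> n\<close> by auto
  qed
  ultimately show ?thesis using assms(2) ssyt_mono_bound unfolding tabB_def by blast
qed

lemma down_lemma:
  assumes "n \<le> n'" "(S, T) \<in> (crystal_steps n' lam)\<^sup>*" "T \<in> tabB n lam"
  shows "(S, T) \<in> (crystal_steps n lam)\<^sup>*"
  using assms(2)
proof (induction rule: converse_rtrancl_induct)
  case base then show ?case by simp
next
  case (step S Y)
  have Yin: "Y \<in> tabB n lam" using src_in[OF step.IH assms(3)] .
  from step.hyps(1) obtain i where i: "S \<in> tabB n' lam" "i \<in> {1..n'}" "crystal_F i S = Some Y"
    unfolding crystal_steps_def by auto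
  from F_down[OF assms(1) i(1) i(3) Yin] i(2) have "(S, Y) \<in> crystal_steps n lam"
    using i(3) unfolding crystal_steps_def by auto
  with step.IH show ?case by (meson converse_rtrancl_into_rtrancl)
qed

lemma steps_mono: "n \<le> n' \<Longrightarrow> (crystal_steps n lam)\<^sup>* \<subseteq> (crystal_steps n' lam)\<^sup>*"
proof (rule rtrancl_mono, rule subsetI)
  fix p assume n: "n \<le> n'" and p: "p \<in> crystal_steps n lam"
  obtain S T where pST: "p = (S, T)" by (cases p)
  from p pST obtain i where "ssyt n lam S" "i \<in> {1..n}" "crystal_F i S = Some T"
    unfolding crystal_steps_def tabB_def by auto
  with n show "p \<in> crystal_steps n' lam" unfolding pST crystal_steps_def tabB_def
    using ssyt_mono[of n lam S n'] by auto
qed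

lemma sh_steps:
  assumes "is_partition lam" "(s, t) \<in> (crystal_steps n lam)\<^sup>*"
  shows "(sh d s, sh d t) \<in> (crystal_steps (n + d) lam)\<^sup>*"
  using assms(2)
proof (induction rule: rtrancl_induct)
  case base then show ?case by simp
next
  case (step y z)
  from step.hyps(2) obtain i where i: "y \<in> tabB n lam" "i \<in> {1..n}" "crystal_F i y = Some z"
    unfolding crystal_steps_def by auto
  have "sh d y \<in> tabB (n + d) lam" using i(1) ssyt_sh[OF _ assms(1)] unfolding tabB_def by blast
  moreover have "crystal_F (i + d) (sh d y) = Some (sh d z)" using F_shift[of i d y] i(3) by simp
  ultimately have "(sh d y, sh d z) \<in> crystal_steps (n + d) lam"
    unfolding crystal_steps_def using i(2) by force
  with step.IH show ?case by (meson rtrancl_into_rtrancl)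
qed

lemma up_lemma:
  assumes "is_partition lam" "(sh d x, Z) \<in> (crystal_steps (n + d) lam)\<^sup>*" "x \<in> tabB n lam"
  shows "\<exists>z. Z = sh d z \<and> (x, z) \<in> (crystal_steps n lam)\<^sup>* \<and> (\<forall>v\<in>set (concat z). 1 \<le> v)"
  using assms(2)
proof (induction rule: rtrancl_induct)
  case base then show ?case using assms(3) ssyt_entries unfolding tabB_def by blast
next
  case (step Y Z)
  from step.IH obtain y where y: "Y = sh d y" "(x, y) \<in> (crystal_steps n lam)\<^sup>*" "\<forall>v\<in>set (concat y). 1 \<le> v"
    by blast
  from step.hyps(2) obtain i where i: "Y \<in> tabB (n + d) lam" "i \<in> {1..n + d}" "crystal_F i Y = Some Z"
    unfolding crystal_steps_def by auto
  have yin: "y \<in> tabB n lam" using ssyt_unsh[OF _ y(3) assms(1)] i(1) y(1) unfolding tabB_def by blast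
  have "\<not> i \<le> d"
  proof
    assume "i \<le> d"
    have "i \<notin> set (reading_word Y)"
      using y(1,3) \<open>i \<le> d\<close> i(2) unfolding reading_word_def sh_def by fastforce
    then have "crystal_F i Y = None" unfolding crystal_F_def by (simp add: unm_notin)
    with i(3) show False by simp
  qed
  then obtain j where j: "i = j + d" "j \<in> {1..n}" using i(2)
    by (intro that[of "i - d"]) auto
  from i(3) F_shift[of j d y] j(1) y(1) obtain z where z: "crystal_F j y = Some z" "Z = sh d z"
    by auto
  have yz: "(y, z) \<in> crystal_steps n lam" using yin j(2) z(1) unfolding crystal_steps_def by auto
  have pos: "\<forall>v\<in>set (concat z). 1 \<le> v" using F_entries[OF z(1)] y(3) by fastforce
  have xz: "(x, z) \<in> (crystal_steps n lam)\<^sup>*" using y(2) yz by (rule rtrancl_into_rtrancl)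
  show ?case using z(2) xz pos by blast
qed


theorem lemma5p3:
  fixes n n' :: nat and lam :: "nat list"
  assumes "1 \<le> n" and "n \<le> n'"
    and "is_partition lam" and "length lam \<le> n"
    and "\<not> is_lattice (tabB n lam) (crystal_le n lam)"
  shows "\<not> is_lattice (tabB n' lam) (crystal_le n' lam)"
proof
  assume L: "is_lattice (tabB n' lam) (crystal_le n' lam)"
  define d where "d = n' - n"
  have n': "n' = n + d" using assms(2) unfolding d_def by simp
  have P: "is_partition lam" by fact
  have sub: "tabB n lam \<subseteq> tabB n' lam" using ssyt_mono assms(2) unfolding tabB_def by blast
  have mono: "\<And>a b. crystal_le n lam a b \<Longrightarrow> crystal_le n' lam a b"
    using steps_mono[OF assms(2)] unfolding crystal_le_def by blast
  have down: "\<And>a b. crystal_le n' lam a b \<Longrightarrow> b \<in> tabB n lam \<Longrightarrow> crystal_le n lam a b \<and> a \<in> tabB n lam"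
    using down_lemma[OF assms(2)] src_in unfolding crystal_le_def by blast
  have shin: "\<And>a. a \<in> tabB n lam \<Longrightarrow> sh d a \<in> tabB n' lam"
    using ssyt_sh[OF _ P] unfolding tabB_def n' by blast
  have shle: "\<And>a b. crystal_le n lam a b \<Longrightarrow> crystal_le n' lam (sh d a) (sh d b)"
    using sh_steps[OF P] unfolding crystal_le_def n' by blast
  have up: "\<And>a Z. crystal_le n' lam (sh d a) Z \<Longrightarrow> a \<in> tabB n lam \<Longrightarrow> Z \<in> tabB n' lam \<Longrightarrow>
      \<exists>z. Z = sh d z \<and> crystal_le n lam a z \<and> z \<in> tabB n lam"
  proof -
    fix a Z assume "crystal_le n' lam (sh d a) Z" "a \<in> tabB n lam" "Z \<in> tabB n' lam"
    from up_lemma[OF P, of d a Z n] this obtain z where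
      z: "Z = sh d z" "(a, z) \<in> (crystal_steps n lam)\<^sup>*" "\<forall>v\<in>set (concat z). 1 \<le> v"
      unfolding crystal_le_def n' by blast
    have "z \<in> tabB n lam" using ssyt_unsh[OF _ z(3) P] \<open>Z \<in> tabB n' lam\<close> z(1)
      unfolding tabB_def n' by blast
    then show "\<exists>z. Z = sh d z \<and> crystal_le n lam a z \<and> z \<in> tabB n lam"
      using z unfolding crystal_le_def by blast
  qed
  have "is_lattice (tabB n lam) (crystal_le n lam)"
    unfolding is_lattice_def
  proof (intro ballI conjI)
    fix x y assume x: "x \<in> tabB n lam" and y: "y \<in> tabB n lam"
    from L shin[OF x] shin[OF y] obtain Z where Z: "Z \<in> tabB n' lam"
      "crystal_le n' lam (sh d x) Z" "crystal_le n' lam (sh d y) Z"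
      "\<forall>w\<in>tabB n' lam. crystal_le n' lam (sh d x) w \<and> crystal_le n' lam (sh d y) w \<longrightarrow> crystal_le n' lam Z w"
      unfolding is_lattice_def by blast
    from up[OF Z(2) x Z(1)] obtain z where z: "Z = sh d z" "crystal_le n lam x z" "z \<in> tabB n lam"
      by blast
    from up[OF Z(3) y Z(1)] obtain z' where z': "Z = sh d z'" "crystal_le n lam y z'"
      by blast
    have "z' = z" using z(1) z'(1) sh_inj by metis
    show "\<exists>z\<in>tabB n lam. crystal_le n lam x z \<and> crystal_le n lam y z \<and>
        (\<forall>w\<in>tabB n lam. crystal_le n lam x w \<and> crystal_le n lam y w \<longrightarrow> crystal_le n lam z w)"
    proof (intro bexI conjI ballI impI)
      show "crystal_le n lam x z" by (rule z(2))
      show "crystal_le n lam y z" using z'(2) \<open>z' = z\<close> by simp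
      show "z \<in> tabB n lam" by (rule z(3))
      fix w assume w: "w \<in> tabB n lam" "crystal_le n lam x w \<and> crystal_le n lam y w"
      then have "crystal_le n' lam Z (sh d w)" using Z(4) shin shle by blast
      then obtain w' where "sh d w = sh d w'" "crystal_le n lam z w'"
        using up z(1) z(3) shin[OF w(1)] by blast
      then show "crystal_le n lam z w" using sh_inj by metis
    qed
  next
    fix x y assume x: "x \<in> tabB n lam" and y: "y \<in> tabB n lam"
    from L sub x y obtain z where z: "z \<in> tabB n' lam"
      "crystal_le n' lam z x" "crystal_le n' lam z y"
      "\<forall>w\<in>tabB n' lam. crystal_le n' lam w x \<and> crystal_le n' lam w y \<longrightarrow> crystal_le n' lam w z"
      unfolding is_lattice_def by blast
    from down[OF z(2) x] down[OF z(3) y] have zz: "crystal_le n lam z x" "crystal_le n lam z y" "z \<in> tabB n lam"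
      by auto
    show "\<exists>z\<in>tabB n lam. crystal_le n lam z x \<and> crystal_le n lam z y \<and>
        (\<forall>w\<in>tabB n lam. crystal_le n lam w x \<and> crystal_le n lam w y \<longrightarrow> crystal_le n lam w z)"
    proof (intro bexI conjI ballI impI)
      show "crystal_le n lam z x" "crystal_le n lam z y" "z \<in> tabB n lam" by (fact zz)+
      fix w assume w: "w \<in> tabB n lam" "crystal_le n lam w x \<and> crystal_le n lam w y"
      then have "crystal_le n' lam w z" using z(4) sub mono by blast
      then show "crystal_le n lam w z" using down zz(3) by blast
    qed
  qed
  with assms(5) show False by contradiction
qed


end
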